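(* Let $\mathbb G=V_1\times V_2$ be a step-two Carnot group and $f\in\mathcal A_h(\mathbb G)$. Then $f$ is $[V_1,V_1]$-affine, i.e. for every $(x,z)\in\mathbb G$ and every $y,y'\in V_1$, the map $t\in\mathbb R\mapsto f((x,z)\cdot(0,t[y,y']))=f(x,z+t[y,y'])$ is affine.
   Context: A step-two Carnot group is $\mathbb G=V_1\times V_2$, where $V_1,V_2$ are finite-dimensional real vector spaces with $V_2\neq\{0\}$, equipped with a bilinear skew-symmetric map $[\cdot,\cdot]:V_1\times V_1\to V_2$ with $\operatorname{span}\{[x,x']:x,x'\in V_1\}=V_2$, and group law $(x,z)\cdot(x',z')=(x+x',z+z'+[x,x'])$. $[V_1,V_1]:=\{[x,x']:x,x'\in V_1\}$ (identified with $\{0\}\times[V_1,V_1]$). $\mathcal A_h(\mathbb G)$ is the space of $h$-affine maps $f:\mathbb G\to\mathbb R$, i.e. such that for all $(x,z)\in\mathbb G$, $y\in V_1$, $t\mapsto f((x,z)\cdot(ty,0))$ is affine. *)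

theory Defs
  imports "HOL-Analysis.Analysis"
begin

text \<open>A step-two Carnot group G = V1 x V2, with V1, V2 finite-dimensional real vector
  spaces (modelled by euclidean_space types, which are nonzero), and a bilinear skew-symmetric
  bracket whose image spans V2.\<close>

definition step_two_carnot :: "('a::euclidean_space \<Rightarrow> 'a \<Rightarrow> 'b::euclidean_space) \<Rightarrow> bool" where
  "step_two_carnot br \<longleftrightarrow>
     bilinear br \<and> (\<forall>x x'. br x x' = - br x' x) \<and>
     span {br x x' | x x'. True} = UNIV"

definition carnot_mult :: "('a::euclidean_space \<Rightarrow> 'a \<Rightarrow> 'b::euclidean_space) \<Rightarrow> 'a \<times> 'b \<Rightarrow> 'a \<times> 'b \<Rightarrow> 'a \<times> 'b" where
  "carnot_mult br p q = (fst p + fst q, snd p + snd q + br (fst p) (fst q))"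

definition affine_real_fun :: "(real \<Rightarrow> real) \<Rightarrow> bool" where
  "affine_real_fun g \<longleftrightarrow> (\<exists>a b. \<forall>t. g t = a * t + b)"

definition h_affine :: "('a::euclidean_space \<Rightarrow> 'a \<Rightarrow> 'b::euclidean_space) \<Rightarrow> ('a \<times> 'b \<Rightarrow> real) \<Rightarrow> bool" where
  "h_affine br f \<longleftrightarrow> (\<forall>p y. affine_real_fun (\<lambda>t. f (carnot_mult br p (t *\<^sub>R y, 0))))"

end

theory Submission
  imports Defs
begin

theorem proposition3p1:
  fixes br :: "'a::euclidean_space \<Rightarrow> 'a \<Rightarrow> 'b::euclidean_space"
    and f :: "'a \<times> 'b \<Rightarrow> real"
  assumes "step_two_carnot br"
    and "h_affine br f"
  shows "\<forall>x z y y'. affine_real_fun (\<lambda>t. f (carnot_mult br (x, z) (0, t *\<^sub>R br y y')))"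
proof (intro allI)
  fix x z y y'
  have bl: "bilinear br" using assms(1) unfolding step_two_carnot_def by blast
  have ha: "\<And>p v. \<exists>a b. \<forall>t. f (fst p + t *\<^sub>R v, snd p + br (fst p) (t *\<^sub>R v)) = a * t + b"
    using assms(2) unfolding h_affine_def affine_real_fun_def carnot_mult_def by simp
  have rad: "f (x + u, \<zeta> + br x u) + f (x - u, \<zeta> - br x u) = 2 * f (x, \<zeta>)" for u \<zeta>
  proof -
    obtain a b where ab: "\<And>t. f (x + t *\<^sub>R u, \<zeta> + br x (t *\<^sub>R u)) = a * t + b"
      using ha[of "(x, \<zeta>)" u] by auto
    have 1: "f (x + u, \<zeta> + br x u) = a + b" using ab[of 1] by simp
    have 2: "f (x - u, \<zeta> - br x u) = - a + b" using ab[of "-1"]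
      by (simp add: bilinear_rneg[OF bl])
    have 3: "f (x, \<zeta>) = b" using ab[of 0] by (simp add: bilinear_rzero[OF bl])
    show ?thesis using 1 2 3 by simp
  qed
  obtain a1 b1 where l1: "\<And>t. f (x + y + t *\<^sub>R y', z + br x y + br (x + y) (t *\<^sub>R y')) = a1 * t + b1"
    using ha[of "(x + y, z + br x y)" y'] by auto
  obtain a2 b2 where l2: "\<And>t. f (x - y + t *\<^sub>R (-y'), z - br x y + br (x - y) (t *\<^sub>R (-y'))) = a2 * t + b2"
    using ha[of "(x - y, z - br x y)" "-y'"] by auto
  have key: "f (x, z + t *\<^sub>R br y y') = ((a1 + a2)/2) * t + (b1 + b2)/2" for t
  proof -
    let ?u = "y + t *\<^sub>R y'"
    let ?\<zeta> = "z + t *\<^sub>R br y y'"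
    have e1: "(x + y + t *\<^sub>R y', z + br x y + br (x + y) (t *\<^sub>R y')) = (x + ?u, ?\<zeta> + br x ?u)"
      by (simp add: bilinear_ladd[OF bl] bilinear_radd[OF bl] bilinear_rmul[OF bl] algebra_simps)
    have e2: "(x - y + t *\<^sub>R (-y'), z - br x y + br (x - y) (t *\<^sub>R (-y'))) = (x - ?u, ?\<zeta> - br x ?u)"
      by (simp add: bilinear_lsub[OF bl] bilinear_radd[OF bl] bilinear_rneg[OF bl] bilinear_rmul[OF bl] algebra_simps)
    have f1: "f (x + ?u, ?\<zeta> + br x ?u) = a1 * t + b1" using l1[of t] e1 by metis
    have f2: "f (x - ?u, ?\<zeta> - br x ?u) = a2 * t + b2" using l2[of t] e2 by metis
    have "f (x + ?u, ?\<zeta> + br x ?u) + f (x - ?u, ?\<zeta> - br x ?u) = 2 * f (x, ?\<zeta>)"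
      by (rule rad)
    then show ?thesis unfolding f1 f2 by (simp add: field_simps)
  qed
  show "affine_real_fun (\<lambda>t. f (carnot_mult br (x, z) (0, t *\<^sub>R br y y')))"
    unfolding affine_real_fun_def carnot_mult_def
    using key by (intro exI[of _ "(a1 + a2)/2"] exI[of _ "(b1 + b2)/2"]) (simp add: bilinear_rzero[OF bl])
qed

end
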